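(* Let $\star$ be a semistar operation on an integral domain $D$ and $T$ an overring of $D$. Then $T$ is $t$-linked to $(D,\star)$ if and only if $T^{\ell_{\star,T}}=T$.
   Context: Let $D$ be an integral domain with quotient field $K$. $\overline{\mathbf F}(D)$ denotes the set of all nonzero $D$-submodules of $K$ and $\mathbf f(D)$ the set of nonzero finitely generated $D$-submodules of $K$. A semistar operation on $D$ is a map $\star:\overline{\mathbf F}(D)\to\overline{\mathbf F}(D)$, $E\mapsto E^\star$, such that for all $0\ne x\in K$ and $E,F\in\overline{\mathbf F}(D)$: (1) $(xE)^\star=xE^\star$; (2) $E\subseteq F\Rightarrow E^\star\subseteq F^\star$; (3) $E\subseteq E^\star$ and $(E^\star)^\star=E^\star$. $\star_f$ is defined by $E^{\star_f}=\bigcup\{F^\star:F\in\mathbf f(D),F\subseteq E\}$. A nonzero ideal $I$ of $D$ is a quasi-$\star$-ideal if $I^\star\cap D=I$; a quasi-$\star$-prime is a prime quasi-$\star$-ideal. An overring of $D$ is a ring $T$ with $D\subseteq T\subseteq K$; semistar operations on $T$ are defined likewise. For an overring $T$, $v_T$ is $E\mapsto (T:_K(T:_KE))$ and $t_T:=(v_T)_f$. If $\star'$ is a semistar operation on $T$, $T$ is $(\star,\star')$-linked to $D$ if for every nonzero finitely generated ideal $F\subseteq D$ with $F^\star=D^\star$ one has $(FT)^{\star'}=T^{\star'}$; $T$ is $t$-linked to $(D,\star)$ if it is $(\star,t_T)$-linked to $D$. The semistar operation $\ell_{\star,T}$ on $T$ is defined by $E^{\ell_{\star,T}}=\bigcap\{ET_{D\setminus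 P}: P$ a quasi-$\star_f$-prime ideal of $D\}$ for $E\in\overline{\mathbf F}(T)$ (equal to $K$ if there are none). *)

theory Defs
  imports Main
begin

text \<open>The quotient field K is modelled as a type 'a of class field; D, T are subsets.\<close>

definition is_subring :: "'a::field set \<Rightarrow> bool" where
  "is_subring R \<longleftrightarrow> 0 \<in> R \<and> 1 \<in> R \<and>
     (\<forall>x\<in>R. \<forall>y\<in>R. x + y \<in> R \<and> - x \<in> R \<and> x * y \<in> R)"

definition has_quotient_field :: "'a::field set \<Rightarrow> bool" where
  "has_quotient_field D \<longleftrightarrow> is_subring D \<and>
     (\<forall>x. \<exists>a\<in>D. \<exists>b\<in>D. b \<noteq> 0 \<and> x = a / b)"

definition is_submod :: "'a::field set \<Rightarrow> 'a set \<Rightarrow> bool" where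
  "is_submod R E \<longleftrightarrow> 0 \<in> E \<and> (\<forall>x\<in>E. \<forall>y\<in>E. x + y \<in> E) \<and> (\<forall>r\<in>R. \<forall>x\<in>E. r * x \<in> E)"

definition Fbar :: "'a::field set \<Rightarrow> 'a set set" where
  "Fbar R = {E. is_submod R E \<and> E \<noteq> {0}}"

definition fgen :: "'a::field set \<Rightarrow> 'a set \<Rightarrow> 'a set" where
  "fgen R S = {(\<Sum>s\<in>S. c s * s) | c. \<forall>s\<in>S. c s \<in> R}"

definition fsub :: "'a::field set \<Rightarrow> 'a set set" where
  "fsub R = {E. E \<in> Fbar R \<and> (\<exists>S. finite S \<and> E = fgen R S)}"

definition semistar :: "'a::field set \<Rightarrow> ('a set \<Rightarrow> 'a set) \<Rightarrow> bool" where
  "semistar R st \<longleftrightarrow>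
     (\<forall>E\<in>Fbar R. st E \<in> Fbar R) \<and>
     (\<forall>x E. x \<noteq> 0 \<longrightarrow> E \<in> Fbar R \<longrightarrow> st ((\<lambda>y. x * y) ` E) = (\<lambda>y. x * y) ` st E) \<and>
     (\<forall>E F. E \<in> Fbar R \<longrightarrow> F \<in> Fbar R \<longrightarrow> E \<subseteq> F \<longrightarrow> st E \<subseteq> st F) \<and>
     (\<forall>E\<in>Fbar R. E \<subseteq> st E \<and> st (st E) = st E)"

definition st_f :: "'a::field set \<Rightarrow> ('a set \<Rightarrow> 'a set) \<Rightarrow> 'a set \<Rightarrow> 'a set" where
  "st_f R st E = \<Union>{st F | F. F \<in> fsub R \<and> F \<subseteq> E}"

definition is_ideal :: "'a::field set \<Rightarrow> 'a set \<Rightarrow> bool" where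
  "is_ideal D I \<longleftrightarrow> is_submod D I \<and> I \<subseteq> D"

definition quasi_prime :: "'a::field set \<Rightarrow> ('a set \<Rightarrow> 'a set) \<Rightarrow> 'a set \<Rightarrow> bool" where
  "quasi_prime D st P \<longleftrightarrow> is_ideal D P \<and> P \<noteq> {0} \<and> P \<noteq> D \<and>
     (\<forall>a\<in>D. \<forall>b\<in>D. a * b \<in> P \<longrightarrow> a \<in> P \<or> b \<in> P) \<and> st P \<inter> D = P"

definition colon :: "'a::field set \<Rightarrow> 'a set \<Rightarrow> 'a set" where
  "colon A B = {x. \<forall>b\<in>B. x * b \<in> A}"

definition v_op :: "'a::field set \<Rightarrow> 'a set \<Rightarrow> 'a set" where
  "v_op T E = colon T (colon T E)"

definition t_op :: "'a::field set \<Rightarrow> 'a set \<Rightarrow> 'a set" where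
  "t_op T = st_f T (v_op T)"

definition modprod :: "'a::field set \<Rightarrow> 'a set \<Rightarrow> 'a set" where
  "modprod A B = {(\<Sum>i<n. a i * b i) | n (a :: nat \<Rightarrow> 'a) b. \<forall>i<n. a i \<in> A \<and> b i \<in> B}"

definition frac :: "'a::field set \<Rightarrow> 'a set \<Rightarrow> 'a set" where
  "frac T S = {t / s | t s. t \<in> T \<and> s \<in> S}"

definition t_linked :: "'a::field set \<Rightarrow> ('a set \<Rightarrow> 'a set) \<Rightarrow> 'a set \<Rightarrow> bool" where
  "t_linked D st T \<longleftrightarrow>
     (\<forall>F. F \<in> fsub D \<and> F \<subseteq> D \<and> st F = st D \<longrightarrow> t_op T (modprod F T) = t_op T T)"

text \<open>ell_{star,T}; the intersection over the empty family is UNIV = K\<close>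
definition ell :: "'a::field set \<Rightarrow> ('a set \<Rightarrow> 'a set) \<Rightarrow> 'a set \<Rightarrow> 'a set \<Rightarrow> 'a set" where
  "ell D st T E = \<Inter>{modprod E (frac T (D - P)) | P. quasi_prime D (st_f D st) P}"

end

theory Submission
  imports Defs
begin


lemma submod_sum:
  assumes "is_submod R E" "finite S" "\<forall>s\<in>S. f s \<in> E"
  shows "sum f S \<in> E"
  using assms(2,3)
proof (induction S rule: finite_induct)
  case empty then show ?case using assms(1) by (simp add: is_submod_def)
next
  case (insert x F) then show ?case using assms(1) by (simp add: is_submod_def)
qed

lemma subring_submod: "is_subring R \<Longrightarrow> is_submod R R"
  by (simp add: is_subring_def is_submod_def)

lemma fgen_memI: "\<forall>s\<in>S. c s \<in> R \<Longrightarrow> x = (\<Sum>s\<in>S. c s * s) \<Longrightarrow> x \<in> fgen R S"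
  unfolding fgen_def by blast

lemma fgen_submod:
  assumes "is_subring R" shows "is_submod R (fgen R S)"
  unfolding is_submod_def
proof (intro conjI ballI)
  show "0 \<in> fgen R S" unfolding fgen_def
    by (rule CollectI, rule exI[of _ "\<lambda>_. 0"]) (use assms in \<open>simp add: is_subring_def\<close>)
next
  fix x y assume "x \<in> fgen R S" "y \<in> fgen R S"
  then obtain c d where c: "x = (\<Sum>s\<in>S. c s * s)" "\<forall>s\<in>S. c s \<in> R"
    and d: "y = (\<Sum>s\<in>S. d s * s)" "\<forall>s\<in>S. d s \<in> R" unfolding fgen_def by blast
  have "x + y = (\<Sum>s\<in>S. (c s + d s) * s)" using c d by (simp add: distrib_right sum.distrib)
  moreover have "\<forall>s\<in>S. c s + d s \<in> R" using c d assms by (simp add: is_subring_def)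
  ultimately show "x + y \<in> fgen R S" by (intro fgen_memI) auto
next
  fix r x assume "r \<in> R" "x \<in> fgen R S"
  then obtain c where c: "x = (\<Sum>s\<in>S. c s * s)" "\<forall>s\<in>S. c s \<in> R" unfolding fgen_def by blast
  have "r * x = (\<Sum>s\<in>S. (r * c s) * s)" using c by (simp add: sum_distrib_left mult.assoc)
  moreover have "\<forall>s\<in>S. r * c s \<in> R" using c assms \<open>r \<in> R\<close> by (simp add: is_subring_def)
  ultimately show "r * x \<in> fgen R S" by (intro fgen_memI) auto
qed

lemma fgen_gens:
  assumes "is_subring R" "finite S" shows "S \<subseteq> fgen R S"
proof
  fix s assume s: "s \<in> S"
  have "(\<Sum>t\<in>S. (if t = s then 1 else 0) * t) = (\<Sum>t\<in>S. if t = s then t else 0)"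
    by (rule sum.cong) auto
  also have "\<dots> = s" using assms(2) s by (simp add: sum.delta)
  finally have "(\<Sum>t\<in>S. (if t = s then 1 else 0) * t) = s" .
  moreover have "\<forall>t\<in>S. (if t = s then 1 else 0) \<in> R" using assms(1) by (simp add: is_subring_def)
  ultimately show "s \<in> fgen R S" by (intro fgen_memI) auto
qed

lemma fgen_least:
  assumes "is_submod R E" "finite S" "S \<subseteq> E" shows "fgen R S \<subseteq> E"
proof
  fix x assume "x \<in> fgen R S"
  then obtain c where c: "x = (\<Sum>s\<in>S. c s * s)" "\<forall>s\<in>S. c s \<in> R" unfolding fgen_def by blast
  have "\<forall>s\<in>S. c s * s \<in> E" using c assms(1,3) by (auto simp: is_submod_def)
  then show "x \<in> E" using c(1) submod_sum[OF assms(1,2)] by simp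
qed

lemma fgen_scale:
  assumes "b \<noteq> (0::'a::field)" "finite S"
  shows "(\<lambda>y. b * y) ` fgen R S = fgen R ((\<lambda>y. b * y) ` S)"
proof
  have inj: "inj_on (\<lambda>y. b * y) S" using assms(1) by (auto simp: inj_on_def)
  show "(\<lambda>y. b * y) ` fgen R S \<subseteq> fgen R ((\<lambda>y. b * y) ` S)"
  proof
    fix z assume "z \<in> (\<lambda>y. b * y) ` fgen R S"
    then obtain c where c: "z = b * (\<Sum>s\<in>S. c s * s)" "\<forall>s\<in>S. c s \<in> R" unfolding fgen_def by blast
    have "(\<Sum>u\<in>(\<lambda>y. b * y) ` S. c (u / b) * u) = (\<Sum>s\<in>S. c (b * s / b) * (b * s))"
      by (subst sum.reindex[OF inj]) (simp add: o_def)
    also have "\<dots> = z" using assms(1) c(1) by (simp add: sum_distrib_left mult.left_commute)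
    finally have "z = (\<Sum>u\<in>(\<lambda>y. b * y) ` S. c (u / b) * u)" by simp
    moreover have "\<forall>u\<in>(\<lambda>y. b * y) ` S. c (u / b) \<in> R" using c(2) assms(1) by auto
    ultimately show "z \<in> fgen R ((\<lambda>y. b * y) ` S)" by (intro fgen_memI) auto
  qed
  show "fgen R ((\<lambda>y. b * y) ` S) \<subseteq> (\<lambda>y. b * y) ` fgen R S"
  proof
    fix z assume "z \<in> fgen R ((\<lambda>y. b * y) ` S)"
    then obtain c where c: "z = (\<Sum>u\<in>(\<lambda>y. b * y) ` S. c u * u)" "\<forall>u\<in>(\<lambda>y. b * y) ` S. c u \<in> R"
      unfolding fgen_def by blast
    have "z = (\<Sum>s\<in>S. c (b * s) * (b * s))" using c(1) by (subst (asm) sum.reindex[OF inj]) (simp add: o_def)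
    also have "\<dots> = b * (\<Sum>s\<in>S. c (b * s) * s)" by (simp add: sum_distrib_left mult.left_commute)
    finally have "z = b * (\<Sum>s\<in>S. c (b * s) * s)" .
    moreover have "(\<Sum>s\<in>S. c (b * s) * s) \<in> fgen R S" using c(2) by (intro fgen_memI[where c="\<lambda>s. c (b * s)"]) auto
    ultimately show "z \<in> (\<lambda>y. b * y) ` fgen R S" by blast
  qed
qed


lemma st_f_mem: "x \<in> st_f D st E \<longleftrightarrow> (\<exists>F. F \<in> fsub D \<and> F \<subseteq> E \<and> x \<in> st F)"
  by (auto simp: st_f_def)

lemma fsub_fgen: "is_subring R \<Longrightarrow> finite S \<Longrightarrow> fgen R S \<noteq> {0} \<Longrightarrow> fgen R S \<in> fsub R"
  by (auto simp: fsub_def Fbar_def fgen_submod)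

lemma fsub_D: "F \<in> fsub R \<Longrightarrow> \<exists>S. finite S \<and> F = fgen R S"
  by (auto simp: fsub_def)

lemma fsub_Fbar: "F \<in> fsub R \<Longrightarrow> F \<in> Fbar R"
  by (auto simp: fsub_def)

lemma ss_Fbar: "semistar D st \<Longrightarrow> E \<in> Fbar D \<Longrightarrow> st E \<in> Fbar D"
  by (simp add: semistar_def)
lemma ss_submod: "semistar D st \<Longrightarrow> E \<in> Fbar D \<Longrightarrow> is_submod D (st E)"
  by (simp add: semistar_def Fbar_def)
lemma ss_ext: "semistar D st \<Longrightarrow> E \<in> Fbar D \<Longrightarrow> E \<subseteq> st E"
  by (simp add: semistar_def)
lemma ss_idem: "semistar D st \<Longrightarrow> E \<in> Fbar D \<Longrightarrow> st (st E) = st E"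
  by (simp add: semistar_def)
lemma ss_mono: "semistar D st \<Longrightarrow> E \<in> Fbar D \<Longrightarrow> F \<in> Fbar D \<Longrightarrow> E \<subseteq> F \<Longrightarrow> st E \<subseteq> st F"
  by (simp add: semistar_def)
lemma ss_scale: "semistar D st \<Longrightarrow> E \<in> Fbar D \<Longrightarrow> x \<noteq> 0 \<Longrightarrow> st ((\<lambda>y. x * y) ` E) = (\<lambda>y. x * y) ` st E"
  by (simp add: semistar_def)

lemma ideal_nz_fsub:
  assumes "is_subring D" "is_ideal D M" "M \<noteq> {0}"
  shows "\<exists>K. K \<in> fsub D \<and> K \<subseteq> M"
proof -
  have "0 \<in> M" using assms(2) by (simp add: is_ideal_def is_submod_def)
  then obtain m where m: "m \<in> M" "m \<noteq> 0" using assms(3) by blast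
  have "m \<in> fgen D {m}" using fgen_gens[OF assms(1)] by auto
  then have "fgen D {m} \<noteq> {0}" using m by auto
  then have "fgen D {m} \<in> fsub D" using fsub_fgen[OF assms(1)] by simp
  moreover have "fgen D {m} \<subseteq> M" using m assms(2) by (intro fgen_least) (auto simp: is_ideal_def)
  ultimately show ?thesis by blast
qed

lemma L1:
  assumes R: "is_subring D" and ss: "semistar D st" and M: "is_ideal D M" "M \<noteq> {0}"
    and fin: "finite S" and S: "S \<subseteq> st_f D st M"
  shows "\<exists>K. K \<in> fsub D \<and> K \<subseteq> M \<and> S \<subseteq> st K"
  using fin S
proof (induction S rule: finite_induct)
  case empty then show ?case using ideal_nz_fsub[OF R M] by blast
next
  case (insert s S)
  then obtain K where K: "K \<in> fsub D" "K \<subseteq> M" "S \<subseteq> st K" by auto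
  from insert obtain H where H: "H \<in> fsub D" "H \<subseteq> M" "s \<in> st H" by (auto simp: st_f_mem)
  obtain A where A: "finite A" "K = fgen D A" using fsub_D[OF K(1)] by blast
  obtain B where B: "finite B" "H = fgen D B" using fsub_D[OF H(1)] by blast
  define K' where "K' = fgen D (A \<union> B)"
  have MM: "is_submod D M" using M by (simp add: is_ideal_def)
  have sub: "is_submod D K'" unfolding K'_def by (rule fgen_submod[OF R])
  have "A \<union> B \<subseteq> K'" unfolding K'_def using fgen_gens[OF R, of "A \<union> B"] A B by simp
  then have KK: "K \<subseteq> K'" "H \<subseteq> K'" using fgen_least[OF sub] A B by auto
  have "A \<union> B \<subseteq> M" using fgen_gens[OF R] A B K H by blast
  then have K'M: "K' \<subseteq> M" unfolding K'_def using fgen_least[OF MM] A B by simp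
  have "K \<noteq> {0}" using K(1) by (auto simp: fsub_def Fbar_def)
  moreover have "0 \<in> K" using K(1) by (auto simp: fsub_def Fbar_def is_submod_def)
  ultimately have "K' \<noteq> {0}" using KK by blast
  then have K'f: "K' \<in> fsub D" unfolding K'_def using fsub_fgen[OF R] A B by simp
  have "st K \<subseteq> st K'" "st H \<subseteq> st K'" using ss_mono[OF ss] fsub_Fbar K'f K(1) H(1) KK by auto
  then show ?case using K'f K'M K H by blast
qed

lemma L2:
  assumes R: "is_subring D" and ss: "semistar D st" and M: "is_ideal D M" "M \<noteq> {0}"
  shows "is_submod D (st_f D st M)"
  unfolding is_submod_def
proof (intro conjI ballI)
  obtain K where K: "K \<in> fsub D" "K \<subseteq> M" using L1[OF R ss M, of "{}"] by auto
  then show "0 \<in> st_f D st M"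
    using ss_submod[OF ss fsub_Fbar[OF K(1)]] by (auto simp: st_f_mem is_submod_def)
next
  fix x y assume "x \<in> st_f D st M" "y \<in> st_f D st M"
  then obtain K where K: "K \<in> fsub D" "K \<subseteq> M" "{x,y} \<subseteq> st K" using L1[OF R ss M, of "{x,y}"] by auto
  then have "x + y \<in> st K" using ss_submod[OF ss fsub_Fbar[OF K(1)]] by (auto simp: is_submod_def)
  then show "x + y \<in> st_f D st M" using K by (auto simp: st_f_mem)
next
  fix r x assume "r \<in> D" "x \<in> st_f D st M"
  then obtain K where K: "K \<in> fsub D" "K \<subseteq> M" "x \<in> st K" by (auto simp: st_f_mem)
  then have "r * x \<in> st K" using \<open>r \<in> D\<close> ss_submod[OF ss fsub_Fbar[OF K(1)]] by (auto simp: is_submod_def)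
  then show "r * x \<in> st_f D st M" using K by (auto simp: st_f_mem)
qed

lemma L3:
  assumes R: "is_subring D" and ss: "semistar D st" and M: "is_ideal D M" "M \<noteq> {0}"
    and E: "E \<subseteq> st_f D st M"
  shows "st_f D st E \<subseteq> st_f D st M"
proof
  fix z assume "z \<in> st_f D st E"
  then obtain G where G: "G \<in> fsub D" "G \<subseteq> E" "z \<in> st G" by (auto simp: st_f_mem)
  obtain S where S: "finite S" "G = fgen D S" using fsub_D[OF G(1)] by blast
  have "S \<subseteq> st_f D st M" using fgen_gens[OF R S(1)] S G E by blast
  then obtain K where K: "K \<in> fsub D" "K \<subseteq> M" "S \<subseteq> st K" using L1[OF R ss M S(1)] by blast
  have "G \<subseteq> st K" using S fgen_least[OF ss_submod[OF ss fsub_Fbar[OF K(1)]]] K by simp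
  then have "st G \<subseteq> st (st K)" using ss_mono[OF ss fsub_Fbar[OF G(1)] ss_Fbar[OF ss fsub_Fbar[OF K(1)]]] by simp
  then have "z \<in> st K" using G ss_idem[OF ss fsub_Fbar[OF K(1)]] by auto
  then show "z \<in> st_f D st M" using K by (auto simp: st_f_mem)
qed

lemma L4:
  assumes R: "is_subring D" and ss: "semistar D st" and M: "is_ideal D M" "M \<noteq> {0}"
  shows "M \<subseteq> st_f D st M"
proof
  fix m assume m: "m \<in> M"
  show "m \<in> st_f D st M"
  proof (cases "m = 0")
    case True then show ?thesis using L2[OF R ss M] by (simp add: is_submod_def)
  next
    case False
    have "m \<in> fgen D {m}" using fgen_gens[OF R] by auto
    then have "fgen D {m} \<noteq> {0}" using False by auto
    then have f: "fgen D {m} \<in> fsub D" using fsub_fgen[OF R] by simp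
    have "fgen D {m} \<subseteq> M" using m M by (intro fgen_least) (auto simp: is_ideal_def)
    moreover have "m \<in> st (fgen D {m})" using ss_ext[OF ss fsub_Fbar[OF f]] \<open>m \<in> fgen D {m}\<close> by auto
    ultimately show ?thesis using f by (auto simp: st_f_mem)
  qed
qed


lemma chain_fin:
  assumes "finite S" "S \<subseteq> \<Union>C" "C \<noteq> {}" "subset.chain Z C"
  shows "\<exists>Q\<in>C. S \<subseteq> Q"
  using assms(1,2)
proof (induction S rule: finite_induct)
  case empty then show ?case using assms(3) by auto
next
  case (insert x F)
  then obtain Q where Q: "Q \<in> C" "F \<subseteq> Q" by auto
  obtain Q' where Q': "Q' \<in> C" "x \<in> Q'" using insert by auto
  have "Q \<subseteq> Q' \<or> Q' \<subseteq> Q" using assms(4) Q Q' unfolding subset.chain_def by blast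
  then show ?case using Q Q' by blast
qed

definition addgen :: "'a::field set \<Rightarrow> 'a set \<Rightarrow> 'a \<Rightarrow> 'a set" where
  "addgen D M a = {m + r * a | m r. m \<in> M \<and> r \<in> D}"

lemma addgen:
  assumes R: "is_subring D" and M: "is_ideal D M" and a: "a \<in> D"
  shows "is_ideal D (addgen D M a)" "M \<subseteq> addgen D M a" "a \<in> addgen D M a"
proof -
  have M0: "0 \<in> M" using M by (simp add: is_ideal_def is_submod_def)
  have R01: "0 \<in> D" "1 \<in> D" using R by (auto simp: is_subring_def)
  show "M \<subseteq> addgen D M a"
  proof
    fix m assume "m \<in> M" then show "m \<in> addgen D M a" unfolding addgen_def
      using R01 by (intro CollectI exI[of _ m] exI[of _ 0]) simp
  qed
  show "a \<in> addgen D M a" unfolding addgen_def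
    using R01 M0 by (intro CollectI exI[of _ 0] exI[of _ 1]) simp
  show "is_ideal D (addgen D M a)" unfolding is_ideal_def is_submod_def
  proof (intro conjI ballI subsetI)
    show "0 \<in> addgen D M a" unfolding addgen_def
      using R01 M0 by (intro CollectI exI[of _ 0] exI[of _ 0]) simp
  next
    fix x y assume "x \<in> addgen D M a" "y \<in> addgen D M a"
    then obtain m r m' r' where "x = m + r * a" "m \<in> M" "r \<in> D" "y = m' + r' * a" "m' \<in> M" "r' \<in> D"
      unfolding addgen_def by blast
    moreover have "x + y = (m + m') + (r + r') * a" using calculation by (simp add: algebra_simps)
    moreover have "m + m' \<in> M" using calculation M by (simp add: is_ideal_def is_submod_def)
    moreover have "r + r' \<in> D" using calculation R by (simp add: is_subring_def)
    ultimately show "x + y \<in> addgen D M a" unfolding addgen_def by blast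
  next
    fix s x assume "s \<in> D" "x \<in> addgen D M a"
    then obtain m r where "x = m + r * a" "m \<in> M" "r \<in> D"
      unfolding addgen_def by blast
    moreover have "s * x = s * m + (s * r) * a" using calculation by (simp add: algebra_simps)
    moreover have "s * m \<in> M" using calculation M \<open>s \<in> D\<close> by (simp add: is_ideal_def is_submod_def)
    moreover have "s * r \<in> D" using calculation R \<open>s \<in> D\<close> by (simp add: is_subring_def)
    ultimately show "s * x \<in> addgen D M a" unfolding addgen_def by blast
  next
    fix x assume "x \<in> addgen D M a"
    then obtain m r where "x = m + r * a" "m \<in> M" "r \<in> D"
      unfolding addgen_def by blast
    moreover have "m \<in> D" using calculation M by (auto simp: is_ideal_def)
    ultimately show "x \<in> D" using R a by (simp add: is_subring_def)
  qed
qed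

lemma exists_qprime:
  assumes R: "is_subring D" and ss: "semistar D st" and I: "is_ideal D I" "I \<noteq> {0}"
    and one: "1 \<notin> st_f D st I"
  shows "\<exists>P. quasi_prime D (st_f D st) P \<and> I \<subseteq> P"
proof -
  define Z where "Z = {Q. is_ideal D Q \<and> I \<subseteq> Q \<and> 1 \<notin> st_f D st Q}"
  have "Z \<noteq> {}" using I one unfolding Z_def by blast
  moreover have "\<Union>C \<in> Z" if C: "C \<noteq> {}" "subset.chain Z C" for C
  proof -
    have CZ: "C \<subseteq> Z" using C(2) by (simp add: subset.chain_def)
    have ch: "\<forall>x\<in>C. \<forall>y\<in>C. x \<subseteq> y \<or> y \<subseteq> x" using C(2) unfolding subset.chain_def by blast
    have id: "is_ideal D (\<Union>C)" unfolding is_ideal_def is_submod_def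
    proof (intro conjI ballI subsetI)
      obtain Q where "Q \<in> C" using C by blast
      then show "0 \<in> \<Union>C" using CZ by (auto simp: Z_def is_ideal_def is_submod_def)
    next
      fix x y assume "x \<in> \<Union>C" "y \<in> \<Union>C"
      then obtain Q where Q: "Q \<in> C" "{x,y} \<subseteq> Q" using chain_fin[of "{x,y}" C Z] C by auto
      then have "x + y \<in> Q" using CZ by (auto simp: Z_def is_ideal_def is_submod_def)
      then show "x + y \<in> \<Union>C" using Q by blast
    next
      fix r x assume "r \<in> D" "x \<in> \<Union>C"
      then obtain Q where Q: "Q \<in> C" "x \<in> Q" by auto
      then have "r * x \<in> Q" using CZ \<open>r \<in> D\<close> by (auto simp: Z_def is_ideal_def is_submod_def)
      then show "r * x \<in> \<Union>C" using Q by blast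
    next
      fix x assume "x \<in> \<Union>C"
      then show "x \<in> D" using CZ by (auto simp: Z_def is_ideal_def)
    qed
    have "I \<subseteq> \<Union>C" using C CZ by (auto simp: Z_def)
    moreover have "1 \<notin> st_f D st (\<Union>C)"
    proof
      assume "1 \<in> st_f D st (\<Union>C)"
      then obtain G where G: "G \<in> fsub D" "G \<subseteq> \<Union>C" "1 \<in> st G" by (auto simp: st_f_mem)
      obtain S where S: "finite S" "G = fgen D S" using fsub_D[OF G(1)] by blast
      have "S \<subseteq> \<Union>C" using fgen_gens[OF R S(1)] S G by blast
      then obtain Q where Q: "Q \<in> C" "S \<subseteq> Q" using chain_fin[OF S(1) _ C] by blast
      have QZ: "Q \<in> Z" using Q CZ by auto
      then have "G \<subseteq> Q" using S Q fgen_least[of D Q S] by (auto simp: Z_def is_ideal_def)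
      then have "1 \<in> st_f D st Q" using G by (auto simp: st_f_mem)
      then show False using QZ by (auto simp: Z_def)
    qed
    ultimately show ?thesis using id by (simp add: Z_def)
  qed
  ultimately obtain M where MZ: "M \<in> Z" and Mmax: "\<forall>X\<in>Z. M \<subseteq> X \<longrightarrow> X = M"
    using subset_Zorn_nonempty[of Z] by blast
  have Mi: "is_ideal D M" and IM: "I \<subseteq> M" and M1: "1 \<notin> st_f D st M" using MZ by (auto simp: Z_def)
  have Mnz: "M \<noteq> {0}" using IM I by (auto simp: is_ideal_def is_submod_def)
  have key: "d \<in> M" if d: "d \<in> D" "d \<in> st_f D st M" for d
  proof -
    note ag = addgen[OF R Mi d(1)]
    have "addgen D M d \<subseteq> st_f D st M"
    proof
      fix x assume "x \<in> addgen D M d"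
      then obtain m r where x: "x = m + r * d" "m \<in> M" "r \<in> D" unfolding addgen_def by blast
      have "m \<in> st_f D st M" using L4[OF R ss Mi Mnz] x by auto
      then show "x \<in> st_f D st M" using L2[OF R ss Mi Mnz] x d by (simp add: is_submod_def)
    qed
    then have "st_f D st (addgen D M d) \<subseteq> st_f D st M" using L3[OF R ss Mi Mnz] by blast
    then have "addgen D M d \<in> Z" using ag IM M1 unfolding Z_def by auto
    then have "addgen D M d = M" using Mmax ag by blast
    then show "d \<in> M" using ag by auto
  qed
  have "quasi_prime D (st_f D st) M" unfolding quasi_prime_def
  proof (intro conjI ballI impI)
    show "is_ideal D M" "M \<noteq> {0}" by fact+
    show "M \<noteq> D"
    proof
      assume "M = D"
      then have "1 \<in> M" using R by (simp add: is_subring_def)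
      then show False using L4[OF R ss Mi Mnz] M1 by auto
    qed
    show "st_f D st M \<inter> D = M" using key L4[OF R ss Mi Mnz] Mi by (auto simp: is_ideal_def)
  next
    fix a b assume ab: "a \<in> D" "b \<in> D" "a * b \<in> M"
    show "a \<in> M \<or> b \<in> M"
    proof (rule ccontr)
      assume nab: "\<not> (a \<in> M \<or> b \<in> M)"
      note ag = addgen[OF R Mi ab(1)]
      have "addgen D M a \<noteq> M" using ag nab by auto
      then have "addgen D M a \<notin> Z" using Mmax ag by blast
      then have "1 \<in> st_f D st (addgen D M a)" using ag IM unfolding Z_def by auto
      then obtain G where G: "G \<in> fsub D" "G \<subseteq> addgen D M a" "1 \<in> st G" by (auto simp: st_f_mem)
      obtain S where S: "finite S" "G = fgen D S" using fsub_D[OF G(1)] by blast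
      have b0: "b \<noteq> 0" using nab Mi by (auto simp: is_ideal_def is_submod_def)
      have bG: "(\<lambda>y. b * y) ` G = fgen D ((\<lambda>y. b * y) ` S)" using fgen_scale[OF b0 S(1)] S by simp
      have "G \<noteq> {0}" using G(1) by (auto simp: fsub_def Fbar_def)
      moreover have "0 \<in> G" using G(1) by (auto simp: fsub_def Fbar_def is_submod_def)
      ultimately obtain g where "g \<in> G" "g \<noteq> 0" by blast
      then have "b * g \<in> (\<lambda>y. b * y) ` G" "b * g \<noteq> 0" using b0 by auto
      then have "(\<lambda>y. b * y) ` G \<noteq> {0}" by blast
      then have bGf: "(\<lambda>y. b * y) ` G \<in> fsub D" using bG fsub_fgen[OF R] S(1) by simp
      have "(\<lambda>y. b * y) ` G \<subseteq> M"
      proof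
        fix z assume "z \<in> (\<lambda>y. b * y) ` G"
        then obtain m r where "z = b * (m + r * a)" "m \<in> M" "r \<in> D" using G(2) unfolding addgen_def by blast
        moreover have "z = b * m + r * (a * b)" using calculation by (simp add: algebra_simps)
        moreover have "b * m \<in> M" "r * (a * b) \<in> M" using calculation Mi ab by (auto simp: is_ideal_def is_submod_def)
        ultimately show "z \<in> M" using Mi unfolding is_ideal_def is_submod_def by metis
      qed
      moreover have "b \<in> st ((\<lambda>y. b * y) ` G)" using ss_scale[OF ss fsub_Fbar[OF G(1)] b0] G(3) by force
      ultimately have "b \<in> st_f D st M" using bGf by (auto simp: st_f_mem)
      then have "b \<in> M" using key ab by blast
      then show False using nab by blast
    qed
  qed
  then show ?thesis using IM by blast
qed




lemma qp_one:
  assumes "is_subring D" "quasi_prime D st' P" shows "1 \<notin> P"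
proof
  assume "1 \<in> P"
  then have "D \<subseteq> P" using assms by (force simp: quasi_prime_def is_ideal_def is_submod_def)
  then show False using assms by (auto simp: quasi_prime_def is_ideal_def)
qed

lemma D_Fbar: "is_subring D \<Longrightarrow> D \<in> Fbar D"
  by (auto simp: Fbar_def is_submod_def is_subring_def)

lemma loc_clear:
  fixes n :: nat
  assumes R: "is_subring D" and T: "is_subring T" and DT: "D \<subseteq> T"
    and qp: "quasi_prime D st' P"
  shows "(\<forall>i<n. a i \<in> T \<and> b i \<in> frac T (D - P)) \<Longrightarrow> \<exists>s\<in>D - P. s * (\<Sum>i<n. a i * b i) \<in> T"
proof (induction n)
  case 0
  then show ?case using R qp_one[OF R qp] T by (auto simp: is_subring_def intro!: bexI[of _ 1])
next
  case (Suc n)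
  then obtain s where s: "s \<in> D - P" "s * (\<Sum>i<n. a i * b i) \<in> T" by auto
  obtain t u where tu: "b n = t / u" "t \<in> T" "u \<in> D - P" using Suc.prems unfolding frac_def by blast
  have P0: "0 \<in> P" using qp by (simp add: quasi_prime_def is_ideal_def is_submod_def)
  have u0: "u \<noteq> 0" using tu P0 by auto
  have pr: "\<forall>a\<in>D. \<forall>b\<in>D. a * b \<in> P \<longrightarrow> a \<in> P \<or> b \<in> P" using qp by (simp add: quasi_prime_def)
  have su: "s * u \<in> D - P" using s tu pr R by (auto simp: is_subring_def)
  have eq: "(s * u) * (\<Sum>i<Suc n. a i * b i) = u * (s * (\<Sum>i<n. a i * b i)) + s * (a n * t)"
    using u0 tu(1) by (simp add: field_simps)
  have "u \<in> T" "s \<in> T" "a n \<in> T" using tu s DT Suc.prems by auto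
  then have "u * (s * (\<Sum>i<n. a i * b i)) + s * (a n * t) \<in> T"
    using s(2) tu(2) T by (simp add: is_subring_def)
  then show ?case using su eq by metis
qed

lemma t_sub:
  assumes T: "is_subring T" and E: "E \<subseteq> T" shows "t_op T E \<subseteq> T"
proof
  fix z assume "z \<in> t_op T E"
  then obtain G where G: "G \<subseteq> E" "z \<in> v_op T G" unfolding t_op_def st_f_def by blast
  have "1 \<in> colon T G" using G E by (auto simp: colon_def)
  then have "z * 1 \<in> T" using G(2) unfolding v_op_def colon_def by blast
  then show "z \<in> T" by simp
qed

lemma tT:
  assumes T: "is_subring T" shows "t_op T T = T"
proof
  show "t_op T T \<subseteq> T" using t_sub[OF T] by simp
  have "fgen T {1} = T"
  proof
    show "fgen T {1} \<subseteq> T" using fgen_least[OF subring_submod[OF T]] T by (simp add: is_subring_def)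
    show "T \<subseteq> fgen T {1}"
    proof
      fix y assume "y \<in> T" then show "y \<in> fgen T {1}" by (intro fgen_memI[where c="\<lambda>_. y"]) auto
    qed
  qed
  moreover have "T \<noteq> {0}" using T by (auto simp: is_subring_def)
  ultimately have Tf: "T \<in> fsub T" using fsub_fgen[OF T, of "{1}"] by simp
  have "T \<subseteq> v_op T T"
  proof
    fix z assume z: "z \<in> T"
    show "z \<in> v_op T T" unfolding v_op_def colon_def
    proof (intro CollectI ballI)
      fix y assume "y \<in> {x. \<forall>b\<in>T. x * b \<in> T}"
      then have "y \<in> T" using T by (force simp: is_subring_def)
      then show "z * y \<in> T" using z T by (simp add: is_subring_def)
    qed
  qed
  then show "T \<subseteq> t_op T T" using Tf unfolding t_op_def st_f_def by blast
qed

lemma modprod_memI: fixes n :: nat shows "\<forall>i<n. a i \<in> F \<and> b i \<in> T \<Longrightarrow> x = (\<Sum>i<n. a i * b i) \<Longrightarrow> x \<in> modprod F T"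
  unfolding modprod_def by blast

lemma modprod_memE: "x \<in> modprod F T \<Longrightarrow> (\<And>n::nat. \<And>a b. \<forall>i<n. a i \<in> F \<and> b i \<in> T \<Longrightarrow> x = (\<Sum>i<n. a i * b i) \<Longrightarrow> P) \<Longrightarrow> P"
  unfolding modprod_def by blast

lemma fgen_modprod:
  assumes "finite S" "S \<subseteq> F" shows "fgen T S \<subseteq> modprod F T"
proof
  fix x assume "x \<in> fgen T S"
  then obtain c where c: "x = (\<Sum>s\<in>S. c s * s)" "\<forall>s\<in>S. c s \<in> T" unfolding fgen_def by blast
  obtain h where h: "bij_betw h {0..<card S} S" using ex_bij_betw_nat_finite[OF assms(1)] by blast
  have "x = (\<Sum>i\<in>{0..<card S}. c (h i) * h i)" using c(1) sum.reindex_bij_betw[OF h, of "\<lambda>s. c s * s"] by simp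
  also have "\<dots> = (\<Sum>i<card S. h i * c (h i))" by (simp add: atLeast0LessThan mult.commute)
  finally have "x = (\<Sum>i<card S. h i * c (h i))" .
  moreover have "\<forall>i<card S. h i \<in> F \<and> c (h i) \<in> T" using h c(2) assms(2) by (auto simp: bij_betw_def)
  ultimately show "x \<in> modprod F T" by (rule modprod_memI[rotated])
qed

lemma modprod_sub:
  assumes T: "is_subring T" "F \<subseteq> T" shows "modprod F T \<subseteq> T"
proof
  fix x assume "x \<in> modprod F T"
  then obtain n :: nat and a b where x: "x = (\<Sum>i<n. a i * b i)" "\<forall>i<n. a i \<in> F \<and> b i \<in> T" by (rule modprod_memE) blast
  have m: "\<forall>x\<in>T. \<forall>y\<in>T. x * y \<in> T" using T(1) by (simp add: is_subring_def)
  have "\<forall>i\<in>{..<n}. a i * b i \<in> T" using x(2) T(2) m by blast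
  then have "(\<Sum>i<n. a i * b i) \<in> T" by (intro submod_sum[OF subring_submod[OF T(1)]]) auto
  then show "x \<in> T" using x(1) by simp
qed



theorem proposition3p16:
  fixes D T :: "'a::field set" and st :: "'a set \<Rightarrow> 'a set"
  assumes "has_quotient_field D"
    and "semistar D st"
    and "is_subring T" and "D \<subseteq> T"
  shows "t_linked D st T \<longleftrightarrow> ell D st T T = T"
proof -
  note ss = assms(2) and Ts = assms(3) and DT = assms(4)
  have R: "is_subring D" using assms(1) by (simp add: has_quotient_field_def)
  have DF: "D \<in> Fbar D" using D_Fbar[OF R] .
  have D1: "1 \<in> D" using R by (simp add: is_subring_def)
  have T1: "1 \<in> T" using Ts by (simp add: is_subring_def)
  have Tell: "T \<subseteq> ell D st T T"
  proof
    fix y assume y: "y \<in> T"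
    show "y \<in> ell D st T T" unfolding ell_def
    proof (rule InterI)
      fix X assume "X \<in> {modprod T (frac T (D - P)) |P. quasi_prime D (st_f D st) P}"
      then obtain P where X: "X = modprod T (frac T (D - P))" and P: "quasi_prime D (st_f D st) P" by blast
      have "1 \<in> frac T (D - P)" unfolding frac_def using T1 D1 qp_one[OF R P]
        by (intro CollectI exI[of _ 1]) simp
      then show "y \<in> X" unfolding X
        by (intro modprod_memI[of 1 "\<lambda>_. y" T "\<lambda>_. 1"]) (auto simp: y)
    qed
  qed
  show ?thesis
  proof
    assume tl: "t_linked D st T"
    show "ell D st T T = T"
    proof
      show "ell D st T T \<subseteq> T"
      proof
        fix x assume x: "x \<in> ell D st T T"
        define I where "I = {d \<in> D. d * x \<in> T}"
        have Iid: "is_ideal D I" unfolding is_ideal_def is_submod_def I_def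
        proof (intro conjI ballI subsetI)
          show "0 \<in> {d \<in> D. d * x \<in> T}" using R Ts by (simp add: is_subring_def)
        next
          fix a b assume "a \<in> {d \<in> D. d * x \<in> T}" "b \<in> {d \<in> D. d * x \<in> T}"
          then show "a + b \<in> {d \<in> D. d * x \<in> T}" using R Ts by (simp add: is_subring_def distrib_right)
        next
          fix r a assume "r \<in> D" "a \<in> {d \<in> D. d * x \<in> T}"
          moreover have "r * a * x = r * (a * x)" by simp
          moreover have "r * a \<in> D" using R calculation by (simp add: is_subring_def)
          moreover have "r * (a * x) \<in> T" using Ts DT calculation unfolding is_subring_def by blast
          ultimately show "r * a \<in> {d \<in> D. d * x \<in> T}" by (simp add: mult.assoc)
        qed auto
        obtain a b where ab: "a \<in> D" "b \<in> D" "b \<noteq> 0" "x = a / b"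
          using assms(1) unfolding has_quotient_field_def by blast
        have "b \<in> I" unfolding I_def using ab DT by auto
        then have Inz: "I \<noteq> {0}" using ab by auto
        have "1 \<in> st_f D st I"
        proof (rule ccontr)
          assume "1 \<notin> st_f D st I"
          then obtain P where P: "quasi_prime D (st_f D st) P" "I \<subseteq> P"
            using exists_qprime[OF R ss Iid Inz] by blast
          have "x \<in> modprod T (frac T (D - P))" using x P unfolding ell_def by blast
          then obtain n :: nat and a b where nab: "\<forall>i<n. a i \<in> T \<and> b i \<in> frac T (D - P)" "x = (\<Sum>i<n. a i * b i)"
            by (rule modprod_memE) blast
          obtain s where s: "s \<in> D - P" "s * x \<in> T" using loc_clear[OF R Ts DT P(1) nab(1)] nab(2) by auto
          then have "s \<in> I" unfolding I_def by auto
          then show False using s P by auto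
        qed
        then obtain F where F: "F \<in> fsub D" "F \<subseteq> I" "1 \<in> st F" by (auto simp: st_f_mem)
        have FD: "F \<subseteq> D" using F I_def by auto
        have FF: "F \<in> Fbar D" using fsub_Fbar[OF F(1)] .
        have "st F = st D"
        proof
          show "st F \<subseteq> st D" using ss_mono[OF ss FF DF FD] .
          have "D \<subseteq> st F"
          proof
            fix r assume "r \<in> D"
            then have "r * 1 \<in> st F" using F(3) ss_submod[OF ss FF] unfolding is_submod_def by blast
            then show "r \<in> st F" by simp
          qed
          then have "st D \<subseteq> st (st F)" using ss_mono[OF ss DF ss_Fbar[OF ss FF]] by simp
          then show "st D \<subseteq> st F" using ss_idem[OF ss FF] by simp
        qed
        then have "t_op T (modprod F T) = t_op T T" using tl F(1) FD unfolding t_linked_def by blast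
        then have "1 \<in> t_op T (modprod F T)" using tT[OF Ts] T1 by simp
        then obtain G where G: "G \<subseteq> modprod F T" "1 \<in> v_op T G" unfolding t_op_def st_f_def by blast
        have "x \<in> colon T G" unfolding colon_def
        proof (intro CollectI ballI)
          fix g assume "g \<in> G"
          then have "g \<in> modprod F T" using G by blast
          then obtain n :: nat and a b where nab: "\<forall>i<n. a i \<in> F \<and> b i \<in> T" "g = (\<Sum>i<n. a i * b i)"
            by (rule modprod_memE) blast
          have "x * g = (\<Sum>i<n. (x * a i) * b i)" using nab(2) by (simp add: sum_distrib_left mult.assoc)
          moreover have "\<forall>i\<in>{..<n}. (x * a i) * b i \<in> T"
          proof
            fix i assume "i \<in> {..<n}"
            then have "a i \<in> I" "b i \<in> T" using nab(1) F(2) by auto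
            then show "(x * a i) * b i \<in> T" using Ts unfolding I_def by (auto simp: is_subring_def mult.commute)
          qed
          ultimately show "x * g \<in> T" using submod_sum[OF subring_submod[OF Ts], of "{..<n}" "\<lambda>i. (x * a i) * b i"] by simp
        qed
        then have "1 * x \<in> T" using G(2) unfolding v_op_def colon_def by blast
        then show "x \<in> T" by simp
      qed
      show "T \<subseteq> ell D st T T" by (rule Tell)
    qed
  next
    assume e: "ell D st T T = T"
    show "t_linked D st T" unfolding t_linked_def
    proof (intro allI impI, elim conjE)
      fix F assume F: "F \<in> fsub D" "F \<subseteq> D" "st F = st D"
      obtain S where S: "finite S" "F = fgen D S" using fsub_D[OF F(1)] by blast
      have SF: "S \<subseteq> F" using fgen_gens[OF R S(1)] S by simp
      define G0 where "G0 = fgen T S"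
      have SG: "S \<subseteq> G0" unfolding G0_def using fgen_gens[OF Ts S(1)] .
      have col: "colon T G0 \<subseteq> T"
      proof
        fix w assume w: "w \<in> colon T G0"
        have "w \<in> ell D st T T" unfolding ell_def
        proof (rule InterI)
          fix X assume "X \<in> {modprod T (frac T (D - P)) |P. quasi_prime D (st_f D st) P}"
          then obtain P where X: "X = modprod T (frac T (D - P))" and P: "quasi_prime D (st_f D st) P" by blast
          have "\<not> S \<subseteq> P"
          proof
            assume "S \<subseteq> P"
            then have "F \<subseteq> P" using S fgen_least[of D P S] P by (auto simp: quasi_prime_def is_ideal_def)
            then have "st F \<subseteq> st_f D st P" using F(1) by (auto simp: st_f_mem)
            moreover have "1 \<in> st D" using ss_ext[OF ss DF] D1 by auto
            ultimately have "1 \<in> P" using F(3) D1 P by (auto simp: quasi_prime_def)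
            then show False using qp_one[OF R P] by simp
          qed
          then obtain s where s: "s \<in> S" "s \<notin> P" by blast
          have sD: "s \<in> D" using s SF F(2) by auto
          have P0: "0 \<in> P" using P by (simp add: quasi_prime_def is_ideal_def is_submod_def)
          have s0: "s \<noteq> 0" using s P0 by auto
          have "w * s \<in> T" using w s SG unfolding colon_def by blast
          then have "w \<in> frac T (D - P)" unfolding frac_def using s sD s0
            by (intro CollectI exI[of _ "w * s"] exI[of _ s]) simp
          then show "w \<in> X" unfolding X
            by (intro modprod_memI[of 1 "\<lambda>_. 1" T "\<lambda>_. w"]) (auto simp: T1)
        qed
        then show "w \<in> T" using e by simp
      qed
      have "F \<noteq> {0}" using F(1) by (auto simp: fsub_def Fbar_def)
      moreover have "0 \<in> F" using F(1) by (auto simp: fsub_def Fbar_def is_submod_def)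
      ultimately obtain f where f: "f \<in> F" "f \<noteq> 0" by blast
      have "\<exists>s\<in>S. s \<noteq> 0"
      proof (rule ccontr)
        assume "\<not> (\<exists>s\<in>S. s \<noteq> 0)"
        then have "\<forall>x\<in>fgen D S. x = 0" unfolding fgen_def by (auto intro!: sum.neutral)
        then show False using f S by auto
      qed
      then have "G0 \<noteq> {0}" using SG by blast
      then have G0f: "G0 \<in> fsub T" unfolding G0_def using fsub_fgen[OF Ts S(1)] by simp
      have G0m: "G0 \<subseteq> modprod F T" unfolding G0_def using fgen_modprod[OF S(1) SF] .
      have "T \<subseteq> v_op T G0"
      proof
        fix z assume z: "z \<in> T"
        show "z \<in> v_op T G0" unfolding v_op_def
        proof (subst colon_def, intro CollectI ballI)
          fix y assume "y \<in> colon T G0"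
          then have "y \<in> T" using col by blast
          then show "z * y \<in> T" using z Ts by (simp add: is_subring_def)
        qed
      qed
      then have "T \<subseteq> t_op T (modprod F T)" using G0f G0m unfolding t_op_def st_f_def by blast
      moreover have "t_op T (modprod F T) \<subseteq> T"
        using t_sub[OF Ts modprod_sub[OF Ts]] F(2) DT by blast
      ultimately show "t_op T (modprod F T) = t_op T T" using tT[OF Ts] by blast
    qed
  qed
qed

end
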